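(* Let $\mathbf{X}\in\mathbb{R}^{D\times n}$ have rank $r\ge 1$, and let $\beta_1,\dots,\beta_r>0$ be the strictly positive eigenvalues of $\mathbf{X}^{\top}\mathbf{X}$ (with multiplicity). Let $\lambda$ be a random variable uniformly distributed on $[0,1]$, and for $\lambda>0$ set $\mathbf{C}^{\star}=(\mathbf{X}^{\top}\mathbf{X}+\lambda\mathbf{I}_n)^{-1}\mathbf{X}^{\top}\mathbf{X}$. Then there exists a matrix $\mathbf{P}\in\mathbb{R}^{n\times r}$ with $\mathbf{P}^{\top}\mathbf{P}=\mathbf{I}_r$ and $\operatorname{rank}(\mathbf{P})=\operatorname{rank}(\mathbf{C}^{\star})=r$ (almost surely in $\lambda$) such that for every $\delta>0$, $$\Pr\big(\|\mathbf{C}^{\star}-\mathbf{P}\mathbf{P}^{\top}\|_F^2\ge\delta\big)\le\frac{1}{\delta}\sum_{i=1}^{r}g(\beta_i),\qquad g(\beta)=\frac{2\beta+1}{\beta+1}+2\beta\ln\!\Big(\frac{\beta}{\beta+1}\Big).$$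
   Context: $\|\cdot\|_F$ is the Frobenius norm; $\mathbf{I}_k$ is the $k\times k$ identity matrix. The event $\lambda=0$ has probability zero and may be ignored. *)

theory Defs
  imports "HOL-Analysis.Analysis" "HOL-Computational_Algebra.Polynomial"
begin

definition frob_norm :: "real^'n^'m \<Rightarrow> real" where
  "frob_norm A = sqrt (\<Sum>i\<in>UNIV. \<Sum>j\<in>UNIV. (A$i$j)^2)"

definition charpoly :: "real^'n^'n \<Rightarrow> real poly" where
  "charpoly A = det (mat [:0, 1:] - (\<chi> i j. [:A$i$j:]))"

definition g_fun :: "real \<Rightarrow> real" where
  "g_fun b = (2*b + 1) / (b + 1) + 2 * b * ln (b / (b + 1))"

end

theory Submission
  imports Defs
begin


lemma sym_dot:
  fixes A :: "real^'n^'n"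
  assumes "transpose A = A"
  shows "x \<bullet> (A *v y) = (A *v x) \<bullet> y"
proof -
  have "x v* A = A *v x" using transpose_matrix_vector[of A x] assms by simp
  then show ?thesis by (metis dot_lmul_matrix)
qed

lemma quad_scale:
  fixes A :: "real^'n^'n"
  shows "(c *\<^sub>R u) \<bullet> (A *v (c *\<^sub>R u)) = c^2 * (u \<bullet> (A *v u))"
  by (simp add: matrix_vector_mult_scaleR power2_eq_square)

lemma spectral_step:
  fixes A :: "real^'n^'n"
  assumes sym: "transpose A = A" and fin: "finite S"
    and nS: "\<And>s. s \<in> S \<Longrightarrow> norm s = 1"
    and eS: "\<And>s. s \<in> S \<Longrightarrow> A *v s = (s \<bullet> (A *v s)) *\<^sub>R s"
    and oS: "pairwise orthogonal S" and card: "card S < CARD('n)"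
  shows "\<exists>v. v \<notin> S \<and> norm v = 1 \<and> A *v v = (v \<bullet> (A *v v)) *\<^sub>R v \<and> (\<forall>s\<in>S. orthogonal v s)"
proof -
  have "dim S \<le> card S" using dim_le_card[OF span_superset fin] .
  then have "dim S < DIM(real^'n)" using card by simp
  then obtain x where x0: "x \<noteq> 0" and xo: "\<And>y. y \<in> span S \<Longrightarrow> orthogonal x y"
    using orthogonal_to_subspace_exists by blast
  define V where "V = {y::real^'n. \<forall>s\<in>S. s \<bullet> y = 0}"
  have subV: "subspace V"
    unfolding subspace_def V_def by (auto simp: inner_add_right inner_scaleR_right)
  have clV: "closed V" using closed_subspace[OF subV] .
  define K where "K = V \<inter> sphere 0 1"
  have cK: "compact K" unfolding K_def
    by (simp add: clV compact_Int_closed compact_sphere Int_commute closed_Int_compact)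
  have xV: "x \<in> V" unfolding V_def mem_Collect_eq
  proof (intro ballI)
    fix s assume "s \<in> S"
    then have "orthogonal x s" using xo span_superset by blast
    then show "s \<bullet> x = 0" unfolding orthogonal_def by (simp add: inner_commute)
  qed
  have "(1 / norm x) *\<^sub>R x \<in> K" unfolding K_def
    using x0 subspace_scale[OF subV xV] by auto
  then have neK: "K \<noteq> {}" by auto
  define f where "f = (\<lambda>y::real^'n. y \<bullet> (A *v y))"
  have cf: "continuous_on K f" unfolding f_def
    by (intro continuous_on_inner continuous_on_id matrix_vector_mult_linear_continuous_on[THEN continuous_on_compose2[of UNIV]]) auto
  obtain v where vK: "v \<in> K" and vmax: "\<And>y. y \<in> K \<Longrightarrow> f y \<le> f v"
    using continuous_attains_sup[OF cK neK cf] by blast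
  define M where "M = f v"
  have vV: "v \<in> V" and nv: "norm v = 1" using vK unfolding K_def by auto
  have vv: "v \<bullet> v = 1" using nv by (simp add: dot_square_norm)
  define w where "w = A *v v - M *\<^sub>R v"
  have AV: "A *v y \<in> V" if "y \<in> V" for y
    unfolding V_def mem_Collect_eq
  proof (intro ballI)
    fix s assume s: "s \<in> S"
    have "s \<bullet> (A *v y) = (A *v s) \<bullet> y" by (rule sym_dot[OF sym])
    also have "\<dots> = (s \<bullet> (A *v s)) * (s \<bullet> y)" by (subst eS[OF s]) simp
    also have "\<dots> = 0" using that s unfolding V_def by simp
    finally show "s \<bullet> (A *v y) = 0" .
  qed
  have wV: "w \<in> V" unfolding w_def
    by (intro subspace_diff[OF subV] AV vV subspace_scale[OF subV])
  have wv: "w \<bullet> v = 0" unfolding w_def M_def f_def using vv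
    by (simp add: inner_diff_left inner_commute[of v "A *v v"])
  have Avw: "A *v v = w + M *\<^sub>R v" by (simp add: w_def)
  have wAv: "w \<bullet> (A *v v) = w \<bullet> w"
    unfolding Avw by (simp add: inner_add_right wv)
  have key: "2 * t * (w \<bullet> w) \<le> t^2 * (M * (w \<bullet> w) - f w)" for t :: real
  proof -
    define u where "u = v + t *\<^sub>R w"
    have uV: "u \<in> V" unfolding u_def
      by (intro subspace_add[OF subV] vV subspace_scale[OF subV] wV)
    have uu: "u \<bullet> u = 1 + t^2 * (w \<bullet> w)"
      unfolding u_def using vv wv
      by (simp add: inner_add_left inner_add_right inner_commute power2_eq_square)
    then have upos: "u \<bullet> u > 0"
      by (smt (verit, ccfv_threshold) inner_ge_zero mult_nonneg_nonneg zero_le_power2)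
    then have nu: "norm u > 0" by (simp add: inner_gt_zero_iff)
    have "(1 / norm u) *\<^sub>R u \<in> K" unfolding K_def
      using nu subspace_scale[OF subV uV] by auto
    then have "f ((1 / norm u) *\<^sub>R u) \<le> M" using vmax M_def by blast
    then have "(1 / norm u)^2 * f u \<le> M" unfolding f_def quad_scale .
    then have fu: "f u \<le> M * (u \<bullet> u)" using nu
      by (simp add: dot_square_norm field_simps)
    have "f u = f v + 2 * t * (w \<bullet> (A *v v)) + t^2 * f w"
      unfolding u_def f_def
      by (simp add: matrix_vector_right_distrib matrix_vector_mult_scaleR inner_add_left
          inner_add_right sym_dot[OF sym, of v w] inner_commute power2_eq_square algebra_simps)
    with fu uu wAv show ?thesis unfolding M_def[symmetric]
      by (simp add: algebra_simps)
  qed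
  have w0: "w = 0"
  proof (rule ccontr)
    assume "w \<noteq> 0"
    then have a: "w \<bullet> w > 0" by simp
    define k where "k = M * (w \<bullet> w) - f w"
    define t where "t = (w \<bullet> w) / (\<bar>k\<bar> + 1)"
    have tp: "t > 0" unfolding t_def using a by (simp add: add_pos_nonneg)
    have "2 * t * (w \<bullet> w) \<le> t^2 * k" using key[of t] unfolding k_def .
    then have "2 * (w \<bullet> w) \<le> t * k" using tp by (simp add: power2_eq_square)
    then have "2 * (w \<bullet> w) * (\<bar>k\<bar> + 1) \<le> (w \<bullet> w) * k" unfolding t_def
      by (simp add: field_simps add_pos_nonneg)
    then have "2 * (\<bar>k\<bar> + 1) \<le> k" using a
      by (metis mult.commute mult.left_commute mult_le_cancel_left_pos)
    then show False by (cases "k \<ge> 0") (simp_all add: abs_if split: if_split_asm)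
  qed
  have eig: "A *v v = (v \<bullet> (A *v v)) *\<^sub>R v" using w0 unfolding w_def M_def f_def by simp
  have orth: "\<forall>s\<in>S. orthogonal v s" using vV unfolding V_def orthogonal_def
    by (simp add: inner_commute)
  have "v \<notin> S"
  proof
    assume "v \<in> S" then have "v \<bullet> v = 0" using vV unfolding V_def by blast
    with vv show False by simp
  qed
  with nv eig orth show ?thesis by blast
qed

lemma spectral_sets:
  fixes A :: "real^'n^'n"
  assumes sym: "transpose A = A"
  shows "k \<le> CARD('n) \<Longrightarrow> \<exists>S. finite S \<and> card S = k \<and>
     (\<forall>s\<in>S. norm s = 1 \<and> A *v s = (s \<bullet> (A *v s)) *\<^sub>R s) \<and> pairwise orthogonal S"
proof (induction k)
  case 0
  then show ?case by (intro exI[of _ "{}"]) auto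
next
  case (Suc k)
  then obtain S where S: "finite S" "card S = k" "\<forall>s\<in>S. norm s = 1 \<and> A *v s = (s \<bullet> (A *v s)) *\<^sub>R s"
    "pairwise orthogonal S" by auto
  obtain v where v: "v \<notin> S" "norm v = 1" "A *v v = (v \<bullet> (A *v v)) *\<^sub>R v" "\<forall>s\<in>S. orthogonal v s"
    using spectral_step[OF sym S(1) _ _ S(4)] S(2,3) Suc.prems by force
  show ?case
  proof (intro exI[of _ "insert v S"] conjI)
    show "finite (insert v S)" using S by simp
    show "card (insert v S) = Suc k" using S v by simp
    show "\<forall>s\<in>insert v S. norm s = 1 \<and> A *v s = (s \<bullet> (A *v s)) *\<^sub>R s" using S v by auto
    show "pairwise orthogonal (insert v S)" using S(4) v(4)
      by (auto simp: pairwise_insert orthogonal_commute)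
  qed
qed

lemma spectral:
  fixes A :: "real^'n^'n"
  assumes sym: "transpose A = A"
  obtains q :: "'n \<Rightarrow> real^'n" and d where "\<And>i j. q i \<bullet> q j = (if i = j then 1 else 0)"
    "\<And>i. A *v q i = d i *\<^sub>R q i"
proof -
  obtain S where S: "finite S" "card S = CARD('n)" "\<forall>s\<in>S. norm s = 1 \<and> A *v s = (s \<bullet> (A *v s)) *\<^sub>R s"
    "pairwise orthogonal S" using spectral_sets[OF sym order.refl] by blast
  obtain h where h: "bij_betw h (UNIV::'n set) S"
    using finite_same_card_bij[of "UNIV::'n set" S] S(1,2) by auto
  have hS: "h i \<in> S" for i using h bij_betwE by blast
  have o: "h i \<bullet> h j = (if i = j then 1 else 0)" for i j
  proof (cases "i = j")
    case True
    then show ?thesis using S(3) hS[of i] by (simp add: dot_square_norm)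
  next
    case False
    then have "h i \<noteq> h j" using h by (metis bij_betw_inv_into_left UNIV_I)
    then show ?thesis using S(4) hS[of i] hS[of j] False
      unfolding pairwise_def orthogonal_def by auto
  qed
  moreover have e: "A *v h i = (h i \<bullet> (A *v h i)) *\<^sub>R h i" for i using S(3) hS[of i] by blast
  show ?thesis by (rule that[of h "\<lambda>i. h i \<bullet> (A *v h i)", OF o e])
qed

lemma onb_inj:
  fixes q :: "'n \<Rightarrow> real^'m"
  assumes orth: "\<And>i j. q i \<bullet> q j = (if i = j then 1 else 0)"
  shows "inj q"
proof (rule injI)
  fix i j assume "q i = q j"
  then have "q i \<bullet> q j = 1" using orth[of j j] by simp
  then show "i = j" using orth[of i j] by (auto split: if_splits)
qed

lemma onb_indep:
  fixes q :: "'n \<Rightarrow> real^'m"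
  assumes orth: "\<And>i j. q i \<bullet> q j = (if i = j then 1 else 0)"
  shows "independent (q ` K)"
proof (rule pairwise_orthogonal_independent)
  show "pairwise orthogonal (q ` K)" unfolding pairwise_def orthogonal_def using orth by auto
  show "0 \<notin> q ` K" using orth by (auto) (metis inner_zero_left one_neq_zero)
qed

lemma onb_expand:
  fixes q :: "'n \<Rightarrow> real^'n"
  assumes orth: "\<And>i j. q i \<bullet> q j = (if i = j then 1 else 0)"
  shows "x = (\<Sum>k\<in>UNIV. (q k \<bullet> x) *\<^sub>R q k)"
proof -
  have ind: "independent (range q)" using onb_indep[OF orth] .
  have "card (range q) = CARD('n)" using onb_inj[OF orth] by (simp add: card_image)
  then have "dim (range q) = DIM(real^'n)" using dim_eq_card_independent[OF ind] by simp
  then have sp: "span (range q) = UNIV" using dim_eq_full by blast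
  define y where "y = x - (\<Sum>k\<in>UNIV. (q k \<bullet> x) *\<^sub>R q k)"
  have "orthogonal y (q j)" for j
  proof -
    have "q j \<bullet> (\<Sum>k\<in>UNIV. (q k \<bullet> x) *\<^sub>R q k) = (\<Sum>k\<in>UNIV. (q k \<bullet> x) * (q j \<bullet> q k))"
      by (simp add: inner_sum_right)
    also have "\<dots> = (\<Sum>k\<in>UNIV. if k = j then q k \<bullet> x else 0)"
      by (rule sum.cong) (auto simp: orth)
    also have "\<dots> = q j \<bullet> x" by simp
    finally have e: "q j \<bullet> (\<Sum>k\<in>UNIV. (q k \<bullet> x) *\<^sub>R q k) = q j \<bullet> x" .
    have "q j \<bullet> y = 0" unfolding y_def inner_diff_right e by simp
    then show ?thesis unfolding orthogonal_def by (simp add: inner_commute)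
  qed
  then have "orthogonal y y" using orthogonal_to_span[of y "range q" y] sp by auto
  then have "y = 0" by (simp add: orthogonal_def)
  then show ?thesis unfolding y_def by simp
qed

lemma onb_parseval:
  fixes q :: "'n \<Rightarrow> real^'n"
  assumes orth: "\<And>i j. q i \<bullet> q j = (if i = j then 1 else 0)"
  shows "x \<bullet> x = (\<Sum>k\<in>UNIV. (q k \<bullet> x)^2)"
proof -
  have "x \<bullet> x = x \<bullet> (\<Sum>k\<in>UNIV. (q k \<bullet> x) *\<^sub>R q k)" using onb_expand[OF orth, of x] by simp
  also have "\<dots> = (\<Sum>k\<in>UNIV. (q k \<bullet> x)^2)"
    by (simp add: inner_sum_right power2_eq_square inner_commute)
  finally show ?thesis .
qed

lemma mv_sum:
  fixes M :: "real^'n^'m"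
  shows "M *v sum f S = (\<Sum>k\<in>S. M *v f k)"
  by (induction S rule: infinite_finite_induct) (auto simp: matrix_vector_right_distrib)

lemma onb_matrix_eq:
  fixes q :: "'n \<Rightarrow> real^'n" and M N :: "real^'n^'m"
  assumes orth: "\<And>i j. q i \<bullet> q j = (if i = j then 1 else 0)"
    and eq: "\<And>k. M *v q k = N *v q k"
  shows "M = N"
proof -
  have "M *v x = N *v x" for x
  proof -
    have "M *v x = M *v (\<Sum>k\<in>UNIV. (q k \<bullet> x) *\<^sub>R q k)" using onb_expand[OF orth, of x] by simp
    also have "\<dots> = (\<Sum>k\<in>UNIV. (q k \<bullet> x) *\<^sub>R (M *v q k))"
      by (simp add: matrix_vector_mult_scaleR mv_sum)
    also have "\<dots> = (\<Sum>k\<in>UNIV. (q k \<bullet> x) *\<^sub>R (N *v q k))" using eq by simp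
    also have "\<dots> = N *v (\<Sum>k\<in>UNIV. (q k \<bullet> x) *\<^sub>R q k)"
      by (simp add: matrix_vector_mult_scaleR mv_sum)
    finally show ?thesis using onb_expand[OF orth, of x] by simp
  qed
  then show ?thesis using matrix_eq by blast
qed



lemma onb_decomp:
  fixes q :: "'n \<Rightarrow> real^'n" and A :: "real^'n^'n"
  assumes orth: "\<And>i j. q i \<bullet> q j = (if i = j then 1 else 0)"
    and eig: "\<And>k. A *v q k = d k *\<^sub>R q k"
  shows "A $ i $ j = (\<Sum>k\<in>UNIV. d k * q k $ i * q k $ j)"
proof -
  define N :: "real^'n^'n" where "N = (\<chi> i j. \<Sum>k\<in>UNIV. d k * q k $ i * q k $ j)"
  have "A = N"
  proof (rule onb_matrix_eq[OF orth])
    fix m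
    have "(N *v q m) $ i = d m * q m $ i" for i
    proof -
      have "(N *v q m) $ i = (\<Sum>j\<in>UNIV. (\<Sum>k\<in>UNIV. d k * q k $ i * q k $ j) * q m $ j)"
        by (simp add: N_def matrix_vector_mult_def)
      also have "\<dots> = (\<Sum>k\<in>UNIV. d k * q k $ i * (\<Sum>j\<in>UNIV. q k $ j * q m $ j))"
        by (simp add: sum_distrib_left sum_distrib_right mult.assoc) (rule sum.swap)
      also have "\<dots> = (\<Sum>k\<in>UNIV. d k * q k $ i * (q k \<bullet> q m))"
        by (simp add: inner_vec_def)
      also have "\<dots> = (\<Sum>k\<in>UNIV. if k = m then d m * q m $ i else 0)"
        by (rule sum.cong) (auto simp: orth)
      also have "\<dots> = d m * q m $ i" by simp
      finally show ?thesis .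
    qed
    then show "A *v q m = N *v q m" by (simp add: eig vec_eq_iff)
  qed
  then show ?thesis by (simp add: N_def)
qed

lemma onb_rows:
  fixes q :: "'n \<Rightarrow> real^'n"
  assumes orth: "\<And>i j. q i \<bullet> q j = (if i = j then 1 else 0)"
  shows "(\<Sum>k\<in>UNIV. q k $ i * q k $ j) = (if i = j then 1 else 0)"
proof -
  have "\<And>k. mat 1 *v q k = 1 *\<^sub>R q k" by simp
  from onb_decomp[OF orth this, of i j] show ?thesis by (simp add: mat_def)
qed

lemma pconst_sum: "[:sum f S:] = (\<Sum>x\<in>S. [:f x:])"
proof (induction S rule: infinite_finite_induct)
  case (insert x F)
  have "[:sum f (insert x F):] = [:f x:] + [:sum f F:]" using insert(1,2) by simp
  then show ?case using insert by simp
qed auto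

lemma order_prod_linear:
  fixes d :: "'a \<Rightarrow> real"
  assumes "finite S"
  shows "order a (\<Prod>i\<in>S. [:-d i, 1:]) = card {i\<in>S. d i = a}"
  using assms
proof (induction S rule: finite_induct)
  case empty
  then show ?case by (simp add: order_0I)
next
  case (insert x S)
  have nz: "(\<Prod>i\<in>insert x S. [:-d i, 1:]) \<noteq> 0"
    using insert(1) by (simp add: prod_zero_iff)
  have eq: "(\<Prod>i\<in>insert x S. [:-d i, 1:]) = [:-d x, 1:] * (\<Prod>i\<in>S. [:-d i, 1:])"
    using insert(1,2) by (rule prod.insert)
  have nz2: "[:-d x, 1:] * (\<Prod>i\<in>S. [:-d i, 1:]) \<noteq> 0" using nz unfolding eq .
  have "order a (\<Prod>i\<in>insert x S. [:-d i, 1:]) = order a [:-d x, 1:] + order a (\<Prod>i\<in>S. [:-d i, 1:])"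
    unfolding eq by (rule order_mult[OF nz2])
  also have "order a [:-d x, 1:] = (if d x = a then 1 else 0)"
  proof (cases "d x = a")
    case True
    then show ?thesis using order_power_n_n[of a 1] by simp
  next
    case False
    have "poly [:-d x, 1:] a \<noteq> 0" using False by simp
    then show ?thesis using False by (simp add: order_0I)
  qed
  finally have o: "order a (\<Prod>i\<in>insert x S. [:-d i, 1:]) = (if d x = a then 1 else 0) + order a (\<Prod>i\<in>S. [:-d i, 1:])" .
  have c: "{i\<in>insert x S. d i = a} = (if d x = a then insert x {i\<in>S. d i = a} else {i\<in>S. d i = a})"
    by auto
  show ?case using o c insert by auto
qed

lemma charpoly_onb:
  fixes q :: "'n \<Rightarrow> real^'n" and A :: "real^'n^'n"
  assumes orth: "\<And>i j. q i \<bullet> q j = (if i = j then 1 else 0)"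
    and eig: "\<And>k. A *v q k = d k *\<^sub>R q k"
  shows "charpoly A = (\<Prod>i\<in>UNIV. [:-d i, 1:])"
proof -
  define Q :: "real poly^'n^'n" where "Q = (\<chi> i k. [:q k $ i:])"
  define E :: "real poly^'n^'n" where "E = (\<chi> i j. if i = j then [:-d i, 1:] else 0)"
  have QQ: "Q ** transpose Q = mat 1"
  proof -
    have "(Q ** transpose Q) $ i $ j = mat 1 $ i $ j" for i j
    proof -
      have "(Q ** transpose Q) $ i $ j = (\<Sum>k\<in>UNIV. [:q k $ i * q k $ j:])"
        by (simp add: Q_def matrix_matrix_mult_def transpose_def mult.commute)
      also have "\<dots> = [:\<Sum>k\<in>UNIV. q k $ i * q k $ j:]" by (simp add: pconst_sum)
      also have "\<dots> = mat 1 $ i $ j" by (simp add: onb_rows[OF orth] mat_def)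
      finally show ?thesis .
    qed
    then show ?thesis by (simp add: vec_eq_iff)
  qed
  have decomp: "mat [:0, 1:] - (\<chi> i j. [:A$i$j:]) = Q ** E ** transpose Q"
  proof -
    have "(mat [:0, 1:] - (\<chi> i j. [:A$i$j:])) $ i $ j = (Q ** E ** transpose Q) $ i $ j" for i j
    proof -
      have "(Q ** E ** transpose Q) $ i $ j = (\<Sum>m\<in>UNIV. [:q m $ i:] * [:-d m, 1:] * [:q m $ j:])"
      proof -
        have "(Q ** E) $ i $ m = [:q m $ i:] * [:-d m, 1:]" for m
        proof -
          have "(Q ** E) $ i $ m = (\<Sum>l\<in>UNIV. if l = m then [:q m $ i:] * [:-d m, 1:] else 0)"
            by (simp add: Q_def E_def matrix_matrix_mult_def if_distrib cong: if_cong)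
          then show ?thesis by simp
        qed
        then show ?thesis by (simp add: matrix_matrix_mult_def transpose_def Q_def)
      qed
      also have "\<dots> = (mat [:0, 1:] - (\<chi> i j. [:A$i$j:])) $ i $ j"
      proof (rule poly_eqI)
        fix n
        show "coeff (\<Sum>m\<in>UNIV. [:q m $ i:] * [:-d m, 1:] * [:q m $ j:]) n =
              coeff ((mat [:0, 1:] - (\<chi> i j. [:A$i$j:])) $ i $ j) n"
        proof (cases n)
          case 0
          show ?thesis using 0
            by (auto simp: coeff_sum mat_def onb_decomp[OF orth eig] sum_negf algebra_simps)
        next
          case (Suc n')
          show ?thesis
          proof (cases n')
            case 0
            then show ?thesis using Suc
              by (simp add: coeff_sum mat_def onb_rows[OF orth])
          next
            case (Suc n'')
            then show ?thesis using \<open>n = Suc n'\<close>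
              by (simp add: coeff_sum mat_def)
          qed
        qed
      qed
      finally show ?thesis by simp
    qed
    then show ?thesis by (simp add: vec_eq_iff)
  qed
  have "charpoly A = det Q * det E * det (transpose Q)"
    unfolding charpoly_def decomp by (simp add: det_mul)
  also have "\<dots> = det E * det (Q ** transpose Q)" by (simp add: det_mul det_transpose)
  also have "\<dots> = (\<Prod>i\<in>UNIV. [:-d i, 1:])" unfolding QQ
    by (simp add: det_diagonal E_def)
  finally show ?thesis .
qed



lemma onb_apply:
  fixes q :: "'n \<Rightarrow> real^'n"
  assumes orth: "\<And>i j. q i \<bullet> q j = (if i = j then 1 else 0)"
  shows "(\<chi> i j. \<Sum>k\<in>UNIV. f k * q k $ i * q k $ j) *v q m = f m *\<^sub>R q m"
proof -
  have "((\<chi> i j. \<Sum>k\<in>UNIV. f k * q k $ i * q k $ j) *v q m) $ i = f m * q m $ i" for i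
  proof -
    have "((\<chi> i j. \<Sum>k\<in>UNIV. f k * q k $ i * q k $ j) *v q m) $ i
        = (\<Sum>j\<in>UNIV. (\<Sum>k\<in>UNIV. f k * q k $ i * q k $ j) * q m $ j)"
      by (simp add: matrix_vector_mult_def)
    also have "\<dots> = (\<Sum>k\<in>UNIV. f k * q k $ i * (\<Sum>j\<in>UNIV. q k $ j * q m $ j))"
      by (simp add: sum_distrib_left sum_distrib_right mult.assoc) (rule sum.swap)
    also have "\<dots> = (\<Sum>k\<in>UNIV. f k * q k $ i * (q k \<bullet> q m))"
      by (simp add: inner_vec_def)
    also have "\<dots> = (\<Sum>k\<in>UNIV. if k = m then f m * q m $ i else 0)"
      by (rule sum.cong) (auto simp: orth)
    also have "\<dots> = f m * q m $ i" by simp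
    finally show ?thesis .
  qed
  then show ?thesis by (simp add: vec_eq_iff)
qed

lemma norm_onb_sum:
  fixes q :: "'n \<Rightarrow> real^'n"
  assumes orth: "\<And>i j. q i \<bullet> q j = (if i = j then 1 else 0)"
  shows "(\<Sum>k\<in>UNIV. a k *\<^sub>R q k) \<bullet> (\<Sum>k\<in>UNIV. a k *\<^sub>R q k) = (\<Sum>k\<in>UNIV. (a k)^2)"
proof -
  have c: "q k \<bullet> (\<Sum>k'\<in>UNIV. a k' *\<^sub>R q k') = a k" for k
  proof -
    have "q k \<bullet> (\<Sum>k'\<in>UNIV. a k' *\<^sub>R q k') = (\<Sum>k'\<in>UNIV. a k' * (q k \<bullet> q k'))"
      by (simp add: inner_sum_right)
    also have "\<dots> = (\<Sum>k'\<in>UNIV. if k' = k then a k else 0)"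
      by (rule sum.cong) (auto simp: orth)
    finally show ?thesis by simp
  qed
  show ?thesis by (simp add: inner_sum_left c power2_eq_square)
qed

lemma frob_onb:
  fixes q :: "'n \<Rightarrow> real^'n"
  assumes orth: "\<And>i j. q i \<bullet> q j = (if i = j then 1 else 0)"
  shows "(\<Sum>i\<in>UNIV. \<Sum>j\<in>UNIV. (\<Sum>k\<in>UNIV. c k * q k $ i * q k $ j)^2) = (\<Sum>k\<in>UNIV. (c k)^2)"
proof -
  have row: "(\<Sum>j\<in>UNIV. (\<Sum>k\<in>UNIV. c k * q k $ i * q k $ j)^2) = (\<Sum>k\<in>UNIV. (c k * q k $ i)^2)" for i
  proof -
    define v where "v = (\<Sum>k\<in>UNIV. (c k * q k $ i) *\<^sub>R q k)"
    have "(\<Sum>j\<in>UNIV. (\<Sum>k\<in>UNIV. c k * q k $ i * q k $ j)^2) = v \<bullet> v"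
      by (simp add: v_def inner_vec_def power2_eq_square)
    also have "\<dots> = (\<Sum>k\<in>UNIV. (c k * q k $ i)^2)" unfolding v_def by (rule norm_onb_sum[OF orth])
    finally show ?thesis .
  qed
  have "(\<Sum>i\<in>UNIV. \<Sum>j\<in>UNIV. (\<Sum>k\<in>UNIV. c k * q k $ i * q k $ j)^2) = (\<Sum>i\<in>UNIV. \<Sum>k\<in>UNIV. (c k * q k $ i)^2)"
    by (rule sum.cong[OF refl row])
  also have "\<dots> = (\<Sum>i\<in>UNIV. \<Sum>k\<in>UNIV. (c k)^2 * (q k $ i * q k $ i))"
    by (simp add: power2_eq_square mult_ac)
  also have "\<dots> = (\<Sum>k\<in>UNIV. (c k)^2 * (q k \<bullet> q k))"
    by (subst sum.swap) (simp add: inner_vec_def sum_distrib_left)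
  also have "\<dots> = (\<Sum>k\<in>UNIV. (c k)^2)" by (simp add: orth)
  finally show ?thesis .
qed

lemma g_antideriv:
  fixes b :: real assumes b: "b > 0"
  shows "(1 - 2 * b * ln (b + 1) - b^2 / (b + 1)) - (0 - 2 * b * ln (b + 0) - b^2 / (b + 0)) = g_fun b"
proof -
  have l: "ln (b / (b + 1)) = ln b - ln (b + 1)" using b by (simp add: ln_div)
  have "b^2 / b = b" using b by (simp add: power2_eq_square)
  moreover have "(2 * b + 1) / (b + 1) = 1 + b - b^2 / (b + 1)" using b
    by (simp add: field_simps power2_eq_square)
  ultimately show ?thesis unfolding g_fun_def l by (simp add: algebra_simps)
qed

lemma g_deriv:
  fixes b x :: real assumes pos: "b + x > 0"
  shows "((\<lambda>x. x - 2 * b * ln (b + x) - b^2 / (b + x)) has_real_derivative (x / (b + x))^2) (at x)"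
proof -
  have "((\<lambda>x. x - 2 * b * ln (b + x) - b^2 / (b + x)) has_real_derivative
        (1 - 2 * b * (1 / (b + x)) - (- (b^2 * 1) / (b + x)^2))) (at x)"
    using pos by (auto intro!: derivative_eq_intros simp: power2_eq_square)
  moreover have "1 - 2 * b * (1 / (b + x)) - (- (b^2 * 1) / (b + x)^2) = (x / (b + x))^2"
  proof -
    have gen: "1 - 2 * b * (1 / y) - (- (b^2 * 1) / y^2) = ((y - b) / y)^2" if "y \<noteq> 0" for y :: real
      using that by (simp add: field_simps power2_eq_square)
    show ?thesis using gen[of "b + x"] pos by simp
  qed
  ultimately show ?thesis by (rule DERIV_cong)
qed



theorem proposition3:
  fixes X :: "real^'n^'d" and r :: nat
  assumes "rank X = r" and "r \<ge> 1" and "CARD('r) = r"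
  defines "C \<equiv> (\<lambda>l::real. matrix_inv (transpose X ** X + l *\<^sub>R mat 1) ** (transpose X ** X))"
  shows "\<exists>P :: real^'r^'n.
     transpose P ** P = mat 1 \<and> rank P = r \<and>
     (AE l in uniform_measure lborel {0..1}. rank (C l) = r) \<and>
     (\<forall>\<delta>>0. measure (uniform_measure lborel {0..1})
                {l. frob_norm (C l - P ** transpose P) ^ 2 \<ge> \<delta>}
           \<le> (1 / \<delta>) * (\<Sum>\<beta>\<in>{\<beta>. \<beta> > 0 \<and> poly (charpoly (transpose X ** X)) \<beta> = 0}.
                  real (order \<beta> (charpoly (transpose X ** X))) * g_fun \<beta>))"
proof -
  define A where "A = transpose X ** X"
  have symA: "transpose A = A" by (simp add: A_def matrix_transpose_mul)
  obtain q :: "'n \<Rightarrow> real^'n" and d where orth: "\<And>i j. q i \<bullet> q j = (if i = j then 1 else 0)"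
    and eig: "\<And>i. A *v q i = d i *\<^sub>R q i" using spectral[OF symA] by blast
  have quad: "x \<bullet> (A *v x) = (X *v x) \<bullet> (X *v x)" for x
  proof -
    have "A *v x = (X *v x) v* X" by (simp add: A_def matrix_vector_mul_assoc[symmetric])
    then have "x \<bullet> (A *v x) = ((X *v x) v* X) \<bullet> x" by (simp add: inner_commute)
    also have "\<dots> = (X *v x) \<bullet> (X *v x)" by (simp add: dot_lmul_matrix)
    finally show ?thesis .
  qed
  have dq: "d k = (X *v q k) \<bullet> (X *v q k)" for k
    using quad[of "q k"] eig[of k] orth[of k k] by simp
  have dnn: "d k \<ge> 0" for k using dq by simp
  have Xq0: "d k = 0 \<Longrightarrow> X *v q k = 0" for k using dq by simp
  define K where "K = {k. d k > 0}"
  have notK: "k \<notin> K \<Longrightarrow> d k = 0" for k using dnn[of k] by (auto simp: K_def)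
  have r1: "rank A \<le> rank X" unfolding A_def by (rule rank_mul_le_right)
  have r2: "rank X \<le> card K"
  proof -
    have "range ((*v) X) \<subseteq> span ((\<lambda>k. X *v q k) ` K)"
    proof
      fix y assume "y \<in> range ((*v) X)"
      then obtain x where y: "y = X *v x" by auto
      have "y = X *v (\<Sum>k\<in>UNIV. (q k \<bullet> x) *\<^sub>R q k)"
        using y onb_expand[OF orth, of x] by simp
      also have "\<dots> = (\<Sum>k\<in>UNIV. (q k \<bullet> x) *\<^sub>R (X *v q k))"
        by (simp add: mv_sum matrix_vector_mult_scaleR)
      also have "\<dots> = (\<Sum>k\<in>K. (q k \<bullet> x) *\<^sub>R (X *v q k))"
        by (rule sum.mono_neutral_right) (auto simp: Xq0 notK)
      also have "\<dots> \<in> span ((\<lambda>k. X *v q k) ` K)"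
        by (intro span_sum span_scale span_base) auto
      finally show "y \<in> span ((\<lambda>k. X *v q k) ` K)" .
    qed
    then have "dim (range ((*v) X)) \<le> card ((\<lambda>k. X *v q k) ` K)" by (rule dim_le_card) auto
    also have "\<dots> \<le> card K" by (rule card_image_le) simp
    finally show ?thesis by (simp add: rank_dim_range)
  qed
  have r3: "card K \<le> rank A"
  proof -
    have sub: "q ` K \<subseteq> range ((*v) A)"
    proof
      fix y assume "y \<in> q ` K" then obtain k where k: "k \<in> K" "y = q k" by auto
      have "A *v ((1 / d k) *\<^sub>R q k) = q k" using k(1) by (simp add: matrix_vector_mult_scaleR eig K_def)
      then show "y \<in> range ((*v) A)" using k by (metis rangeI)
    qed
    have "card (q ` K) \<le> dim (range ((*v) A))" by (rule independent_card_le_dim[OF sub onb_indep[OF orth]])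
    moreover have "card (q ` K) = card K" using onb_inj[OF orth]
      by (simp add: card_image inj_on_subset)
    ultimately show ?thesis by (simp add: rank_dim_range)
  qed
  have cardK: "card K = r" and rankA: "rank A = r" using r1 r2 r3 assms(1) by auto
  obtain e :: "'r \<Rightarrow> 'n" where e: "bij_betw e UNIV K"
    using finite_same_card_bij[of "UNIV::'r set" K] assms(3) cardK by auto
  have einj: "inj e" using e bij_betw_imp_inj_on by blast
  define P :: "real^'r^'n" where "P = (\<chi> i m. q (e m) $ i)"
  have PtP: "transpose P ** P = mat 1"
  proof -
    have "(transpose P ** P) $ m $ m' = mat 1 $ m $ m'" for m m'
    proof -
      have "(transpose P ** P) $ m $ m' = q (e m) \<bullet> q (e m')"
        by (simp add: P_def matrix_matrix_mult_def transpose_def inner_vec_def)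
      also have "\<dots> = mat 1 $ m $ m'" using einj by (simp add: orth mat_def inj_eq)
      finally show ?thesis .
    qed
    then show ?thesis by (simp add: vec_eq_iff)
  qed
  have rankP: "rank P = r"
  proof -
    have "CARD('r) = rank (transpose P ** P)" by (simp add: PtP rank_I)
    also have "\<dots> \<le> rank P" by (rule rank_mul_le_right)
    finally have "CARD('r) \<le> rank P" .
    moreover have "rank P \<le> CARD('r)" using rank_bound[of P] by simp
    ultimately show ?thesis using assms(3) by simp
  qed
  define ind where "ind k = (if k \<in> K then 1 else (0::real))" for k
  have PPt: "P ** transpose P = (\<chi> i j. \<Sum>k\<in>UNIV. ind k * q k $ i * q k $ j)"
  proof -
    have "(P ** transpose P) $ i $ j = (\<Sum>k\<in>UNIV. ind k * q k $ i * q k $ j)" for i j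
    proof -
      have "(P ** transpose P) $ i $ j = (\<Sum>m\<in>UNIV. q (e m) $ i * q (e m) $ j)"
        by (simp add: P_def matrix_matrix_mult_def transpose_def)
      also have "\<dots> = (\<Sum>k\<in>K. q k $ i * q k $ j)"
        using sum.reindex_bij_betw[OF e, of "\<lambda>k. q k $ i * q k $ j"] by simp
      also have "(\<Sum>k\<in>UNIV. ind k * q k $ i * q k $ j) = (\<Sum>k\<in>K. q k $ i * q k $ j)"
        by (rule sum.mono_neutral_cong_right) (auto simp: ind_def)
      ultimately show ?thesis by simp
    qed
    then show ?thesis by (simp add: vec_eq_iff)
  qed
  have PPq: "(P ** transpose P) *v q k = ind k *\<^sub>R q k" for k
    unfolding PPt by (rule onb_apply[OF orth])
  have Cfacts: "(\<forall>k. C l *v q k = (d k / (d k + l)) *\<^sub>R q k) \<and> rank (C l) = r" if lpos: "l > 0" for l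
  proof -
    define B where "B = A + l *\<^sub>R mat 1"
    have dl: "d k + l > 0" for k using dnn[of k] lpos by simp
    have dl': "d k + l \<noteq> 0" for k using dl[of k] by simp
    have Bq: "B *v q k = (d k + l) *\<^sub>R q k" for k
      by (simp add: B_def eig matrix_vector_mult_add_rdistrib scaleR_matrix_vector_assoc[symmetric] scaleR_add_left)
    define Bi :: "real^'n^'n" where "Bi = (\<chi> i j. \<Sum>k\<in>UNIV. (1 / (d k + l)) * q k $ i * q k $ j)"
    have Biq: "Bi *v q k = (1 / (d k + l)) *\<^sub>R q k" for k unfolding Bi_def by (rule onb_apply[OF orth])
    have BBi: "B ** Bi = mat 1"
      by (rule onb_matrix_eq[OF orth]) (use dl' in \<open>simp add: matrix_vector_mul_assoc[symmetric] Biq Bq matrix_vector_mult_scaleR\<close>)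
    have BiB: "Bi ** B = mat 1"
      by (rule onb_matrix_eq[OF orth]) (use dl' in \<open>simp add: matrix_vector_mul_assoc[symmetric] Biq Bq matrix_vector_mult_scaleR\<close>)
    have inv: "matrix_inv B = Bi"
    proof -
      have h: "B ** matrix_inv B = mat 1 \<and> matrix_inv B ** B = mat 1"
        unfolding matrix_inv_def by (rule someI[of _ Bi]) (simp add: BBi BiB)
      have "matrix_inv B = matrix_inv B ** (B ** Bi)" by (simp add: BBi)
      also have "\<dots> = (matrix_inv B ** B) ** Bi" by (simp add: matrix_mul_assoc)
      finally show ?thesis using h by simp
    qed
    have Ceq: "C l = Bi ** A" by (simp add: C_def A_def B_def[unfolded A_def, symmetric] inv)
    have Cq: "C l *v q k = (d k / (d k + l)) *\<^sub>R q k" for k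
      by (simp add: Ceq matrix_vector_mul_assoc[symmetric] eig matrix_vector_mult_scaleR Biq)
    have BC: "B ** C l = A" by (simp add: Ceq matrix_mul_assoc BBi)
    have "rank A \<le> rank (C l)" using rank_mul_le_right[of B "C l"] BC by simp
    moreover have "rank (C l) \<le> rank A" using rank_mul_le_right[of Bi A] Ceq by simp
    ultimately show ?thesis using Cq rankA by auto
  qed
  define G where "G l = (\<Sum>k\<in>K. (l / (d k + l))^2)" for l
  have frobG: "frob_norm (C l - P ** transpose P) ^ 2 = G l" if lpos: "l > 0" for l
  proof -
    define c where "c k = d k / (d k + l) - ind k" for k
    have "(C l - P ** transpose P) *v q k = c k *\<^sub>R q k" for k
      using Cfacts[OF lpos] PPq[of k] by (simp add: c_def matrix_vector_mult_diff_rdistrib scaleR_diff_left)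
    then have ent: "(C l - P ** transpose P) $ i $ j = (\<Sum>k\<in>UNIV. c k * q k $ i * q k $ j)" for i j
      by (rule onb_decomp[OF orth])
    have "frob_norm (C l - P ** transpose P) ^ 2 = (\<Sum>i\<in>UNIV. \<Sum>j\<in>UNIV. ((C l - P ** transpose P) $ i $ j)^2)"
      unfolding frob_norm_def by (simp add: sum_nonneg)
    also have "\<dots> = (\<Sum>k\<in>UNIV. (c k)^2)" unfolding ent by (rule frob_onb[OF orth])
    also have "\<dots> = G l" unfolding G_def
    proof (rule sum.mono_neutral_cong_right)
      show "\<forall>i\<in>UNIV - K. (c i)\<^sup>2 = 0" using notK lpos by (auto simp: c_def ind_def)
      show "(c x)\<^sup>2 = (l / (d x + l))\<^sup>2" if "x \<in> K" for x
      proof -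
        have "c x = - (l / (d x + l))" using that dnn[of x] lpos
          by (simp add: c_def ind_def field_simps)
        then show ?thesis by simp
      qed
    qed auto
    finally show ?thesis .
  qed
  have sumeq: "(\<Sum>\<beta>\<in>{\<beta>. \<beta> > 0 \<and> poly (charpoly A) \<beta> = 0}. real (order \<beta> (charpoly A)) * g_fun \<beta>)
      = (\<Sum>k\<in>K. g_fun (d k))"
  proof -
    have cp: "charpoly A = (\<Prod>i\<in>UNIV. [:-d i, 1:])" by (rule charpoly_onb[OF orth eig])
    have roots: "{\<beta>. \<beta> > 0 \<and> poly (charpoly A) \<beta> = 0} = d ` K"
      unfolding cp by (auto simp: poly_prod K_def)
    have "(\<Sum>k\<in>K. g_fun (d k)) = (\<Sum>y\<in>d ` K. \<Sum>k\<in>{x. x \<in> K \<and> d x = y}. g_fun (d k))"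
      by (rule sum.image_gen) simp
    also have "\<dots> = (\<Sum>y\<in>d ` K. real (order y (charpoly A)) * g_fun y)"
    proof (rule sum.cong[OF refl])
      fix y assume "y \<in> d ` K"
      then have y: "y > 0" by (auto simp: K_def)
      have s: "{x. x \<in> K \<and> d x = y} = {i\<in>UNIV. d i = y}" using y by (auto simp: K_def)
      have "(\<Sum>k\<in>{i\<in>UNIV. d i = y}. g_fun (d k)) = (\<Sum>k\<in>{i\<in>UNIV. d i = y}. g_fun y)"
        by (rule sum.cong) auto
      then show "(\<Sum>k\<in>{x. x \<in> K \<and> d x = y}. g_fun (d k)) = real (order y (charpoly A)) * g_fun y"
        unfolding s by (simp add: cp order_prod_linear)
    qed
    finally show ?thesis using roots by simp
  qed
  have Gcont: "continuous_on {0..1} G" unfolding G_def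
    by (intro continuous_intros) (auto simp: K_def add_pos_nonneg dest: add_pos_nonneg[of _ "_::real"])
  define u where "u x = indicator {0..1} x *\<^sub>R G x" for x :: real
  have Gint: "integral\<^sup>L lborel u = (\<Sum>k\<in>K. g_fun (d k))"
  proof -
    define F where "F x = (\<Sum>k\<in>K. x - 2 * d k * ln (d k + x) - (d k)^2 / (d k + x))" for x
    have "integral\<^sup>L lborel u = F 1 - F 0"
      unfolding u_def
    proof (rule integral_FTC_atLeastAtMost)
      fix x :: real assume x: "0 \<le> x" "x \<le> 1"
      have "(F has_real_derivative G x) (at x)"
        unfolding F_def G_def
      proof (rule DERIV_sum)
        fix k assume "k \<in> K"
        then have "d k + x > 0" using x by (simp add: K_def add_pos_nonneg)
        then show "((\<lambda>x. x - 2 * d k * ln (d k + x) - (d k)^2 / (d k + x)) has_real_derivative (x / (d k + x))^2) (at x)"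
          by (rule g_deriv)
      qed
      then show "(F has_vector_derivative G x) (at x within {0..1})"
        by (simp add: has_real_derivative_iff_has_vector_derivative[symmetric] has_field_derivative_at_within)
    qed (simp_all add: Gcont)
    also have "F 1 - F 0 = (\<Sum>k\<in>K. g_fun (d k))"
      unfolding F_def sum_subtractf[symmetric]
      by (rule sum.cong[OF refl], rule g_antideriv) (simp add: K_def)
    finally show ?thesis .
  qed
  have Gnn: "G x \<ge> 0" for x unfolding G_def by (intro sum_nonneg) simp
  have uint: "integrable lborel u"
    using borel_integrable_atLeastAtMost'[OF Gcont] unfolding set_integrable_def u_def .
  have umeas: "u \<in> borel_measurable lborel" using uint by (rule borel_measurable_integrable)
  have Gmeas: "G \<in> borel_measurable lborel" unfolding G_def by measurable
  define \<mu> where "\<mu> = uniform_measure lborel {0..1::real}"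
  have em01: "emeasure lborel {0..1::real} = 1" by simp
  have fin\<mu>: "finite_measure \<mu>"
    by (rule finite_measureI) (simp add: \<mu>_def em01)
  have bound: "measure \<mu> {l. frob_norm (C l - P ** transpose P) ^ 2 \<ge> \<delta>} \<le> (1 / \<delta>) * (\<Sum>k\<in>K. g_fun (d k))"
    if \<delta>: "\<delta> > 0" for \<delta>
  proof -
    define T where "T = {l. \<delta> \<le> G l} \<union> {0} \<union> (UNIV - {0..1})"
    have Tm: "T \<in> sets lborel" unfolding T_def using Gmeas by measurable
    have sub: "{l. frob_norm (C l - P ** transpose P) ^ 2 \<ge> \<delta>} \<subseteq> T"
    proof
      fix l assume l: "l \<in> {l. frob_norm (C l - P ** transpose P) ^ 2 \<ge> \<delta>}"
      show "l \<in> T"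
      proof (cases "l \<in> {0..1} \<and> l \<noteq> 0")
        case True
        then have "l > 0" by auto
        then show ?thesis using l frobG[of l] unfolding T_def by auto
      next
        case False
        then show ?thesis unfolding T_def by auto
      qed
    qed
    have "measure \<mu> {l. frob_norm (C l - P ** transpose P) ^ 2 \<ge> \<delta>} \<le> measure \<mu> T"
      using finite_measure.finite_measure_mono[OF fin\<mu> sub] Tm by (simp add: \<mu>_def)
    also have "measure \<mu> T = measure lborel ({0..1} \<inter> T)"
      unfolding \<mu>_def using Tm by (subst measure_uniform_measure) (simp_all add: em01)
    also have "{0..1} \<inter> T = {x. \<delta> \<le> u x} \<union> {0}"
      using \<delta> unfolding T_def u_def by (auto simp: indicator_def)
    also have "measure lborel ({x. \<delta> \<le> u x} \<union> {0}) = measure lborel {x. \<delta> \<le> u x}"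
    proof (rule measure_Un_null_set)
      have [measurable]: "u \<in> borel_measurable lborel" by (rule umeas)
      show "{x. \<delta> \<le> u x} \<in> sets lborel" by measurable
      show "{0::real} \<in> null_sets lborel" by (rule finite_imp_null_set_lborel) simp
    qed
    also have "\<dots> = measure lborel {x \<in> space lborel. \<delta> \<le> u x}" by simp
    also have "\<dots> \<le> (\<integral>x. u x \<partial>lborel) / \<delta>"
      by (rule integral_Markov_inequality_measure[OF uint, of UNIV]) (auto simp: u_def Gnn \<delta>)
    also have "\<dots> = (1 / \<delta>) * (\<Sum>k\<in>K. g_fun (d k))" by (simp add: Gint)
    finally show ?thesis .
  qed
  have ae: "AE l in uniform_measure lborel {0..1}. rank (C l) = r"
  proof (rule AE_uniform_measureI)
    show "{0..1::real} \<in> sets lborel" by simp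
    show "AE x in lborel. x \<in> {0..1} \<longrightarrow> rank (C x) = r"
      using AE_lborel_singleton[of "0::real"]
    proof eventually_elim
      case (elim x)
      then show ?case using Cfacts[of x] by auto
    qed
  qed
  show ?thesis
    unfolding A_def[symmetric]
    using PtP rankP ae bound sumeq unfolding \<mu>_def
    by (intro exI[of _ P]) auto
qed


end
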